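(* Let $c>0$ and let $\nu,\tilde\nu$ be probability measures on $\mathbb R_+$ different from $\boldsymbol d_0$. Suppose that for $i=1,2$ the triple $(\boldsymbol{\tilde\delta}_i,\boldsymbol\delta_i,\boldsymbol x_i)$ satisfies: $\boldsymbol{\tilde\delta}_i\in\widetilde{\mathcal D}$, $\boldsymbol x_i\in\mathbb R\setminus\{0\}$, $\boldsymbol\delta_i=c\int\frac{t}{-\boldsymbol x_i(1+\boldsymbol{\tilde\delta}_i t)}\nu(dt)\in\mathcal D$, $\boldsymbol{\tilde\delta}_i=\int\frac{t}{-\boldsymbol x_i(1+\boldsymbol\delta_i t)}\tilde\nu(dt)$, and $$1-\boldsymbol x_i^2\Bigl(c\int\frac{t^2}{\boldsymbol x_i^2(1+\boldsymbol{\tilde\delta}_i t)^2}\nu(dt)\Bigr)\Bigl(\int\frac{t^2}{\boldsymbol x_i^2(1+\boldsymbol\delta_i t)^2}\tilde\nu(dt)\Bigr)>0.$$ If $\boldsymbol{\tilde\delta}_1<\boldsymbol{\tilde\delta}_2$, $\boldsymbol x_1\boldsymbol x_2>0$, and $[\min(\boldsymbol\delta_1,\boldsymbol\delta_2),\max(\boldsymbol\delta_1,\boldsymbol\delta_2)]\subset\mathcal D$, then $\boldsymbol x_1<\boldsymbol x_2$.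
   Context: $\boldsymbol d_0$ is the Dirac mass at $0$. Define $\mathcal D=\{0\}\cup\{\boldsymbol\delta\in\mathbb R\setminus\{0\}:-\boldsymbol\delta^{-1}\notin\operatorname{supp}(\tilde\nu)\}$ if $\operatorname{supp}(\tilde\nu)$ is compact and $\mathcal D=\{\boldsymbol\delta\in\mathbb R\setminus\{0\}:-\boldsymbol\delta^{-1}\notin\operatorname{supp}(\tilde\nu)\}$ otherwise; $\widetilde{\mathcal D}$ is defined in the same way with $\nu$ in place of $\tilde\nu$. *)

theory Defs
  imports "HOL-Probability.Probability"
begin

definition msupp :: "real measure \<Rightarrow> real set" where
  "msupp M = {x. \<forall>U. open U \<and> x \<in> U \<longrightarrow> emeasure M U \<noteq> 0}"

text \<open>The set D associated with a measure mu (D uses the tilde measure, D-tilde uses nu).\<close>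
definition domD :: "real measure \<Rightarrow> real set" where
  "domD mu = (if compact (msupp mu) then {0} else {}) \<union>
              {d. d \<noteq> 0 \<and> - inverse d \<notin> msupp mu}"

definition prob_on_Rplus :: "real measure \<Rightarrow> bool" where
  "prob_on_Rplus M \<longleftrightarrow> prob_space M \<and> sets M = sets borel \<and> emeasure M {0..} = 1"

end

theory Submission imports Defs begin


lemma AE_msupp:
  assumes sM: "sets M = sets (borel::real measure)"
  shows "AE t in M. t \<in> msupp M"
proof -
  define I where "I = {(a,b). a \<in> \<rat> \<and> b \<in> \<rat> \<and> emeasure M {a<..<b::real} = 0}"
  have cI: "countable I"
    by (rule countable_subset[of _ "\<rat> \<times> \<rat>"]) (auto simp: I_def intro!: countable_SIGMA countable_rat)
  have N: "(\<Union>p\<in>I. {fst p<..<snd p}) \<in> null_sets M"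
    by (rule null_sets_UN'[OF cI]) (auto simp: I_def null_sets_def sM)
  show ?thesis
  proof (rule AE_I'[OF N], safe)
    fix p assume "p \<in> space M" "p \<notin> msupp M"
    then obtain U where U: "open U" "p \<in> U" "emeasure M U = 0"
      by (auto simp: msupp_def)
    then obtain e where e: "e > 0" "ball p e \<subseteq> U" by (meson open_contains_ball)
    obtain a where a: "a \<in> \<rat>" "p - e < a" "a < p" using Rats_dense_in_real[of "p-e" p] e by auto
    obtain b where b: "b \<in> \<rat>" "p < b" "b < p + e" using Rats_dense_in_real[of p "p+e"] e by auto
    have sub: "{a<..<b} \<subseteq> U"
      using e a b by (auto simp: dist_real_def subset_iff)
    have "emeasure M {a<..<b} \<le> emeasure M U"
      by (rule emeasure_mono[OF sub]) (use U sM in auto)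
    then have "emeasure M {a<..<b} = 0" using U by simp
    then have "(a,b) \<in> I" using a b by (auto simp: I_def)
    then show "p \<in> (\<Union>p\<in>I. {fst p<..<snd p})" using a b by force
  qed
qed

lemma AE_good:
  assumes "prob_on_Rplus M"
  shows "AE t in M. t \<in> msupp M \<and> 0 \<le> t"
proof -
  interpret prob_space M using assms by (simp add: prob_on_Rplus_def)
  have sM: "sets M = sets borel" using assms by (simp add: prob_on_Rplus_def)
  have "AE t in M. t \<in> {0::real..}"
    using assms by (subst AE_in_set_eq_1) (auto simp: prob_on_Rplus_def sM emeasure_eq_measure)
  then show ?thesis using AE_msupp[OF sM] by eventually_elim auto
qed



lemma not_msupp_ball:
  assumes "p \<notin> msupp M"
  shows "\<exists>r>0. \<forall>t\<in>msupp M. dist t p \<ge> r"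
proof -
  obtain U where U: "open U" "p \<in> U" "emeasure M U = 0"
    using assms by (auto simp: msupp_def)
  then obtain e where e: "e > 0" "ball p e \<subseteq> U" by (meson open_contains_ball)
  have "\<forall>t\<in>msupp M. dist t p \<ge> e"
  proof
    fix t assume t: "t \<in> msupp M"
    show "dist t p \<ge> e"
    proof (rule ccontr)
      assume "\<not> e \<le> dist t p"
      then have "t \<in> U" using e by (auto simp: dist_commute)
      then show False using t U by (auto simp: msupp_def)
    qed
  qed
  then show ?thesis using e by blast
qed

lemma domD_bound:
  assumes "s \<in> domD M"
  shows "\<exists>C\<ge>0. \<forall>t\<in>msupp M. 0 \<le> t \<longrightarrow> 1 + s*t \<noteq> 0 \<and> t \<le> C * \<bar>1 + s*t\<bar>"
proof (cases "s = 0")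
  case True
  then have "compact (msupp M)" using assms by (auto simp: domD_def split: if_splits)
  then obtain R where R: "\<forall>x\<in>msupp M. norm x \<le> R" using compact_imp_bounded bounded_iff by metis
  show ?thesis
    by (rule exI[of _ "max R 0"]) (use R True in auto)
next
  case s0: False
  show ?thesis
  proof (cases "s > 0")
    case True
    show ?thesis
    proof (rule exI[of _ "1/s"], intro conjI ballI impI)
      fix t :: real assume "0 \<le> t"
      then have "s*t \<ge> 0" using True by simp
      then show "1 + s*t \<noteq> 0" by simp
      have "\<bar>1 + s*t\<bar> = 1 + s*t" using \<open>s*t \<ge> 0\<close> by simp
      then show "t \<le> 1/s * \<bar>1 + s*t\<bar>" using True \<open>s*t\<ge>0\<close> by (simp add: field_simps)
    qed (use True in simp)
  next
    case False
    then have sn: "s < 0" using s0 by simp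
    define p where "p = - inverse s"
    have pp: "p > 0" using sn by (simp add: p_def)
    have "p \<notin> msupp M" using assms s0 by (auto simp: domD_def p_def split: if_splits)
    then obtain r where r: "r > 0" "\<forall>t\<in>msupp M. dist t p \<ge> r" using not_msupp_ball by blast
    have key: "1 + s*t = s * (t - p)" for t using sn by (simp add: p_def field_simps)
    show ?thesis
    proof (rule exI[of _ "(1 + p/r) / \<bar>s\<bar>"], intro conjI ballI impI)
      show "0 \<le> (1 + p/r) / \<bar>s\<bar>" using pp r by simp
      fix t assume t: "t \<in> msupp M" "0 \<le> t"
      have d: "\<bar>t - p\<bar> \<ge> r" using r t by (auto simp: dist_real_def)
      have e: "\<bar>1 + s*t\<bar> = \<bar>s\<bar> * \<bar>t - p\<bar>" by (simp add: key abs_mult)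
      show "1 + s*t \<noteq> 0" using e d r sn by auto
      have "(1 + p/r) / \<bar>s\<bar> * \<bar>1 + s*t\<bar> = (1 + p/r) * \<bar>t - p\<bar>"
        using e sn by simp
      also have "\<dots> = \<bar>t - p\<bar> + p * (\<bar>t - p\<bar> / r)" by (simp add: algebra_simps)
      also have "\<dots> \<ge> \<bar>t - p\<bar> + p" 
      proof -
        have "\<bar>t - p\<bar> / r \<ge> 1" using d r by simp
        then have "p * (\<bar>t - p\<bar> / r) \<ge> p" using pp
          by (metis mult.right_neutral mult_left_mono less_imp_le)
        then show ?thesis by simp
      qed
      finally show "t \<le> (1 + p/r) / \<bar>s\<bar> * \<bar>1 + s*t\<bar>" by linarith
    qed
  qed
qed

lemma CS:
  fixes f g :: "real \<Rightarrow> real"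
  assumes i1: "integrable M (\<lambda>t. (f t)^2)" and i2: "integrable M (\<lambda>t. (g t)^2)"
    and i3: "integrable M (\<lambda>t. f t * g t)"
  shows "(LINT t|M. f t * g t)^2 \<le> (LINT t|M. (f t)^2) * (LINT t|M. (g t)^2)"
proof -
  define P where "P = (LINT t|M. (f t)^2)"
  define Q where "Q = (LINT t|M. f t * g t)"
  define R where "R = (LINT t|M. (g t)^2)"
  have q: "0 \<le> P - 2*l*Q + l^2*R" for l
  proof -
    have "0 \<le> (LINT t|M. (f t - l * g t)^2)" by simp
    also have "(LINT t|M. (f t - l * g t)^2) = (LINT t|M. (f t)^2 - (2*l) * (f t * g t) + l^2 * (g t)^2)"
      by (rule Bochner_Integration.integral_cong) (auto simp: power2_eq_square algebra_simps)
    also have "\<dots> = P - 2*l*Q + l^2*R"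
      using i1 i2 i3 by (simp add: P_def Q_def R_def)
    finally show ?thesis .
  qed
  have R0: "R \<ge> 0" by (simp add: R_def)
  show ?thesis
  proof (cases "R = 0")
    case True
    have "Q = 0"
    proof (rule ccontr)
      assume "Q \<noteq> 0"
      have "0 \<le> P - 2*((P+1)/(2*Q))*Q + ((P+1)/(2*Q))^2*R" by (rule q)
      then show False using \<open>Q\<noteq>0\<close> True by (simp add: field_simps)
    qed
    then show ?thesis using True by (simp add: P_def Q_def R_def[symmetric])
  next
    case False
    then have Rp: "R > 0" using R0 by simp
    have "0 \<le> P - 2*(Q/R)*Q + (Q/R)^2*R" by (rule q)
    then have "0 \<le> P - Q^2/R" using Rp by (simp add: power2_eq_square field_simps)
    then have "Q^2 \<le> P * R" using Rp by (simp add: field_simps)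
    then show ?thesis by (simp add: P_def Q_def R_def)
  qed
qed

lemma AE_zero_dirac:
  assumes "prob_on_Rplus M" and "AE t in M. t = 0"
  shows "M = return borel 0"
proof -
  interpret prob_space M using assms by (simp add: prob_on_Rplus_def)
  have sM: "sets M = sets borel" using assms by (simp add: prob_on_Rplus_def)
  show ?thesis
  proof (rule measure_eqI)
    show "sets M = sets (return borel 0)" using sM by simp
    fix A assume A: "A \<in> sets M"
    show "emeasure M A = emeasure (return borel 0) A"
    proof (cases "(0::real) \<in> A")
      case True
      have "AE t in M. t \<in> A" using assms(2) by (rule eventually_mono) (use True in auto)
      then have "measure M A = 1" using A by (subst (asm) AE_in_set_eq_1) auto
      then show ?thesis using True A sM by (simp add: emeasure_eq_measure)
    next
      case False
      have ae: "AE t in M. t \<notin> A" using assms(2) by (rule eventually_mono) (use False in auto)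
      have eq: "{x \<in> space M. \<not> x \<notin> A} = A" using sets.sets_into_space[OF A] by auto
      have "emeasure M A = 0" using AE_iff_measurable[OF A eq] ae by simp
      then show ?thesis using False A sM by simp
    qed
  qed
qed


lemma absmul: fixes u v p q :: real shows "abs u \<le> p \<Longrightarrow> abs v \<le> q \<Longrightarrow> abs (u * v) \<le> p*q"
  unfolding abs_mult by (rule mult_mono) (auto intro: order.trans[OF abs_ge_zero])
lemma abssq: fixes u p :: real shows "abs u \<le> p \<Longrightarrow> abs (u^2) \<le> p*p"
  using absmul[of u p u p] by (simp add: power2_eq_square)
lemma bd: "\<bar>t / a\<bar> \<le> C" if "0 \<le> t" "a \<noteq> 0" "t \<le> C * \<bar>a\<bar>" for t a C :: real
proof -
  have p: "\<bar>a\<bar> > 0" using that by simp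
  have "\<bar>t / a\<bar> = t / \<bar>a\<bar>" using that by (simp add: abs_divide)
  also have "\<dots> \<le> C" using p that(3) by (simp add: pos_divide_le_eq)
  finally show ?thesis .
qed
lemma int_bdd:
  fixes f :: "real \<Rightarrow> real"
  assumes "finite_measure M" "sets M = sets borel" "f \<in> borel_measurable borel"
    "AE t in M. \<bar>f t\<bar> \<le> B"
  shows "integrable M f"
proof -
  have eq: "borel_measurable M = borel_measurable (borel::real measure)"
    by (rule measurable_cong_sets[OF assms(2) refl])
  have m: "f \<in> borel_measurable M" unfolding eq by (rule assms(3))
  have ae: "AE t in M. norm (f t) \<le> B" using assms(4) by (simp add: real_norm_def)
  show ?thesis by (rule finite_measure.integrable_const_bound[OF assms(1) ae m])
qed

lemma side:
  assumes M: "prob_on_Rplus M" and s1: "s1 \<in> domD M" and s2: "s2 \<in> domD M"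
  shows "integrable M (\<lambda>t. t/(1+s1*t))" "integrable M (\<lambda>t. t/(1+s2*t))"
    "(LINT t|M. t/(1+s1*t)) - (LINT t|M. t/(1+s2*t)) = (s2 - s1) * (LINT t|M. (t/(1+s1*t))*(t/(1+s2*t)))"
    "(LINT t|M. (t/(1+s1*t))*(t/(1+s2*t)))^2 \<le> (LINT t|M. (t/(1+s1*t))^2) * (LINT t|M. (t/(1+s2*t))^2)"
    "integrable M (\<lambda>t. (t/(1+s1*t))*(t/(1+s2*t)))"
proof -
  interpret prob_space M using M by (simp add: prob_on_Rplus_def)
  have sM: "sets M = sets borel" using M by (simp add: prob_on_Rplus_def)
  have fm: "finite_measure M" by unfold_locales
  have meq: "borel_measurable M = borel_measurable (borel::real measure)"
    by (rule measurable_cong_sets[OF sM refl])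
  obtain C1 where C1: "C1 \<ge> 0" "\<forall>t\<in>msupp M. 0 \<le> t \<longrightarrow> 1 + s1*t \<noteq> 0 \<and> t \<le> C1 * \<bar>1 + s1*t\<bar>"
    using domD_bound[OF s1] by blast
  obtain C2 where C2: "C2 \<ge> 0" "\<forall>t\<in>msupp M. 0 \<le> t \<longrightarrow> 1 + s2*t \<noteq> 0 \<and> t \<le> C2 * \<bar>1 + s2*t\<bar>"
    using domD_bound[OF s2] by blast
  have AE: "AE t in M. 1 + s1*t \<noteq> 0 \<and> 1 + s2*t \<noteq> 0 \<and> \<bar>t/(1+s1*t)\<bar> \<le> C1 \<and> \<bar>t/(1+s2*t)\<bar> \<le> C2"
    using AE_good[OF M]
  proof (rule eventually_mono)
    fix t assume t: "t \<in> msupp M \<and> 0 \<le> t"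
    have a1: "1 + s1*t \<noteq> 0" "t \<le> C1 * \<bar>1 + s1*t\<bar>" using C1(2) t by auto
    have a2: "1 + s2*t \<noteq> 0" "t \<le> C2 * \<bar>1 + s2*t\<bar>" using C2(2) t by auto
    show "1 + s1*t \<noteq> 0 \<and> 1 + s2*t \<noteq> 0 \<and> \<bar>t/(1+s1*t)\<bar> \<le> C1 \<and> \<bar>t/(1+s2*t)\<bar> \<le> C2"
      using a1 a2 bd[of t] t by blast
  qed
  have m1: "(\<lambda>t. t/(1+s1*t)) \<in> borel_measurable borel" by measurable
  have m2: "(\<lambda>t. t/(1+s2*t)) \<in> borel_measurable borel" by measurable
  show i1: "integrable M (\<lambda>t. t/(1+s1*t))"
    proof (rule int_bdd[OF fm sM m1])
    show "AE t in M. \<bar>t/(1+s1*t)\<bar> \<le> C1" using AE by (rule eventually_mono) blast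
  qed
  show i2: "integrable M (\<lambda>t. t/(1+s2*t))"
    proof (rule int_bdd[OF fm sM m2])
    show "AE t in M. \<bar>t/(1+s2*t)\<bar> \<le> C2" using AE by (rule eventually_mono) blast
  qed
  show i3: "integrable M (\<lambda>t. (t/(1+s1*t))*(t/(1+s2*t)))"
  proof (rule int_bdd[OF fm sM _, of _ "C1*C2"])
    show "(\<lambda>t. (t/(1+s1*t))*(t/(1+s2*t))) \<in> borel_measurable borel" by measurable
    show "AE t in M. \<bar>(t/(1+s1*t))*(t/(1+s2*t))\<bar> \<le> C1*C2"
      using AE by (rule eventually_mono) (blast intro: absmul)
  qed
  have i4: "integrable M (\<lambda>t. (t/(1+s1*t))^2)"
  proof (rule int_bdd[OF fm sM _, of _ "C1*C1"])
    show "(\<lambda>t. (t/(1+s1*t))^2) \<in> borel_measurable borel" by measurable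
    show "AE t in M. \<bar>(t/(1+s1*t))^2\<bar> \<le> C1*C1"
      using AE by (rule eventually_mono) (blast intro: abssq)
  qed
  have i5: "integrable M (\<lambda>t. (t/(1+s2*t))^2)"
  proof (rule int_bdd[OF fm sM _, of _ "C2*C2"])
    show "(\<lambda>t. (t/(1+s2*t))^2) \<in> borel_measurable borel" by measurable
    show "AE t in M. \<bar>(t/(1+s2*t))^2\<bar> \<le> C2*C2"
      using AE by (rule eventually_mono) (blast intro: abssq)
  qed
  show "(LINT t|M. (t/(1+s1*t))*(t/(1+s2*t)))^2 \<le> (LINT t|M. (t/(1+s1*t))^2) * (LINT t|M. (t/(1+s2*t))^2)"
    by (rule CS[OF i4 i5 i3])
  have "(LINT t|M. t/(1+s1*t)) - (LINT t|M. t/(1+s2*t)) = (LINT t|M. t/(1+s1*t) - t/(1+s2*t))"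
    using i1 i2 by simp
  also have "\<dots> = (LINT t|M. (s2 - s1) * ((t/(1+s1*t))*(t/(1+s2*t))))"
  proof (rule integral_cong_AE)
    show "(\<lambda>t. t/(1+s1*t) - t/(1+s2*t)) \<in> borel_measurable M"
      unfolding meq by measurable
    show "(\<lambda>t. (s2 - s1) * ((t/(1+s1*t))*(t/(1+s2*t)))) \<in> borel_measurable M"
      unfolding meq by measurable
    show "AE t in M. t/(1+s1*t) - t/(1+s2*t) = (s2 - s1) * ((t/(1+s1*t))*(t/(1+s2*t)))"
      using AE
    proof (rule eventually_mono)
      fix t assume "1 + s1*t \<noteq> 0 \<and> 1 + s2*t \<noteq> 0 \<and> \<bar>t/(1+s1*t)\<bar> \<le> C1 \<and> \<bar>t/(1+s2*t)\<bar> \<le> C2"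
      then have n1: "1 + s1*t \<noteq> 0" and n2: "1 + s2*t \<noteq> 0" by auto
      show "t/(1+s1*t) - t/(1+s2*t) = (s2 - s1) * ((t/(1+s1*t))*(t/(1+s2*t)))"
        using n1 n2 by (simp add: divide_simps) (simp add: algebra_simps)
    qed
  qed
  also have "\<dots> = (s2 - s1) * (LINT t|M. (t/(1+s1*t))*(t/(1+s2*t)))" by (rule integral_mult_right_zero)
  finally show "(LINT t|M. t/(1+s1*t)) - (LINT t|M. t/(1+s2*t)) = (s2 - s1) * (LINT t|M. (t/(1+s1*t))*(t/(1+s2*t)))" .
qed



lemma prod_pos:
  assumes s1: "s1 \<in> domD M" and s2: "s2 \<in> domD M"
    and I: "{min s1 s2 .. max s1 s2} \<subseteq> domD M"
    and t: "t \<in> msupp M" "0 \<le> t"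
  shows "(1 + s1*t) * (1 + s2*t) > 0"
proof (rule ccontr)
  assume np: "\<not> (1 + s1*t) * (1 + s2*t) > 0"
  have tp: "t > 0"
  proof (rule ccontr)
    assume "\<not> t > 0" then have "t = 0" using t by simp
    then show False using np by simp
  qed
  define q where "q = - 1 / t"
  have q0: "q \<noteq> 0" using tp by (simp add: q_def)
  have le: "q \<le> s" if "1 + s*t \<ge> 0" for s
  proof -
    have "-1 \<le> s * t" using that by simp
    then show ?thesis using tp by (simp add: q_def field_simps)
  qed
  have ge: "s \<le> q" if "1 + s*t \<le> 0" for s
  proof -
    have "s * t \<le> -1" using that by simp
    then show ?thesis using tp by (simp add: q_def field_simps)
  qed
  have m1: "q \<le> max s1 s2"
  proof (cases "1 + s1*t \<ge> 0")
    case True then show ?thesis using le by force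
  next
    case F1: False
    show ?thesis
    proof (cases "1 + s2*t \<ge> 0")
      case True then show ?thesis using le by force
    next
      case False
      then have "(1 + s1*t) * (1 + s2*t) > 0" using F1 by (simp add: mult_neg_neg)
      then show ?thesis using np by blast
    qed
  qed
  have m2: "min s1 s2 \<le> q"
  proof (cases "1 + s1*t \<le> 0")
    case True then show ?thesis using ge by force
  next
    case F1: False
    show ?thesis
    proof (cases "1 + s2*t \<le> 0")
      case True then show ?thesis using ge by force
    next
      case False
      then have "(1 + s1*t) * (1 + s2*t) > 0" using F1 by simp
      then show ?thesis using np by blast
    qed
  qed
  have "q \<in> {min s1 s2 .. max s1 s2}" using m1 m2 by simp
  then have "q \<in> domD M" using I by blast
  then have "- inverse q \<notin> msupp M" using q0 by (auto simp: domD_def split: if_splits)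
  moreover have "- inverse q = t" using tp by (simp add: q_def)
  ultimately show False using t by simp
qed

lemma side2:
  assumes M: "prob_on_Rplus M" and s1: "s1 \<in> domD M" and s2: "s2 \<in> domD M"
    and I: "{min s1 s2 .. max s1 s2} \<subseteq> domD M" and nd: "M \<noteq> return borel 0"
  shows "(LINT t|M. t/(1+s1*t)) - s2 * (LINT t|M. (t/(1+s1*t))*(t/(1+s2*t))) > 0"
proof -
  have sM: "sets M = sets borel" using M by (simp add: prob_on_Rplus_def)
  have meq: "borel_measurable M = borel_measurable (borel::real measure)"
    by (rule measurable_cong_sets[OF sM refl])
  note S = side[OF M s1 s2]
  have int: "integrable M (\<lambda>t. t/(1+s1*t) - s2 * ((t/(1+s1*t))*(t/(1+s2*t))))"
    by (intro Bochner_Integration.integrable_diff Bochner_Integration.integrable_mult_right S(1) S(5))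
  have eq: "(LINT t|M. t/(1+s1*t)) - s2 * (LINT t|M. (t/(1+s1*t))*(t/(1+s2*t)))
      = (LINT t|M. t/(1+s1*t) - s2 * ((t/(1+s1*t))*(t/(1+s2*t))))"
    by (simp only: Bochner_Integration.integral_diff[OF S(1) Bochner_Integration.integrable_mult_right[OF S(5)]] integral_mult_right_zero)
  have AE: "AE t in M. t/(1+s1*t) - s2 * ((t/(1+s1*t))*(t/(1+s2*t))) = t / ((1+s1*t)*(1+s2*t))
        \<and> 0 \<le> t \<and> (1+s1*t)*(1+s2*t) > 0"
    using AE_good[OF M]
  proof (rule eventually_mono)
    fix t assume t: "t \<in> msupp M \<and> 0 \<le> t"
    have p: "(1+s1*t)*(1+s2*t) > 0" using prod_pos[OF s1 s2 I] t by blast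
    then have n1: "1+s1*t \<noteq> 0" and n2: "1+s2*t \<noteq> 0" by auto
    have "t/(1+s1*t) - s2 * ((t/(1+s1*t))*(t/(1+s2*t))) = t / ((1+s1*t)*(1+s2*t))"
      using n1 n2 by (simp add: divide_simps) (simp add: algebra_simps)
    then show "t/(1+s1*t) - s2 * ((t/(1+s1*t))*(t/(1+s2*t))) = t / ((1+s1*t)*(1+s2*t))
        \<and> 0 \<le> t \<and> (1+s1*t)*(1+s2*t) > 0" using t p by blast
  qed
  have nn: "AE t in M. 0 \<le> t/(1+s1*t) - s2 * ((t/(1+s1*t))*(t/(1+s2*t)))"
    using AE by (rule eventually_mono) simp
  have ge: "0 \<le> (LINT t|M. t/(1+s1*t) - s2 * ((t/(1+s1*t))*(t/(1+s2*t))))"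
    by (rule integral_nonneg_AE[OF nn])
  have ne: "(LINT t|M. t/(1+s1*t) - s2 * ((t/(1+s1*t))*(t/(1+s2*t)))) \<noteq> 0"
  proof
    assume "(LINT t|M. t/(1+s1*t) - s2 * ((t/(1+s1*t))*(t/(1+s2*t)))) = 0"
    then have "AE t in M. t/(1+s1*t) - s2 * ((t/(1+s1*t))*(t/(1+s2*t))) = 0"
      using integral_nonneg_eq_0_iff_AE[OF int nn] by simp
    then have "AE t in M. t = 0"
      using AE
    proof eventually_elim
      case (elim t)
      have k: "t / ((1+s1*t)*(1+s2*t)) = 0" using conjunct1[OF elim(2)] elim(1) by linarith
      have p: "(1+s1*t)*(1+s2*t) > 0" using elim(2) by blast
      show "t = 0" using k p by (metis divide_eq_0_iff less_irrefl)
    qed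
    then show False using AE_zero_dirac[OF M] nd by blast
  qed
  show ?thesis using eq ge ne by linarith
qed


lemma int_scale:
  fixes x s :: real
  assumes "x \<noteq> 0"
  shows "(LINT t|M. t / (- x * (1 + s * t))) = - (LINT t|M. t/(1+s*t)) / x"
proof -
  have "(\<lambda>t. t / (- x * (1 + s * t))) = (\<lambda>t. - ((t/(1+s*t)) / x))"
    by (rule ext) (simp add: divide_divide_eq_left mult.commute)
  then show ?thesis by (simp only: Bochner_Integration.integral_minus integral_divide_zero)
qed

lemma int_scale2:
  fixes x s :: real
  shows "(LINT t|M. t\<^sup>2 / (x\<^sup>2 * (1 + s * t)\<^sup>2)) = (LINT t|M. (t/(1+s*t))^2) / x^2"
proof -
  have "(\<lambda>t. t\<^sup>2 / (x\<^sup>2 * (1 + s * t)\<^sup>2)) = (\<lambda>t. (t/(1+s*t))^2 / x^2)"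
    by (rule ext) (simp add: divide_divide_eq_left mult.commute power_divide)
  then show ?thesis by (simp only: integral_divide_zero)
qed

theorem lemma3p9:
  fixes c :: real and \<nu> \<nu>t :: "real measure"
    and dt d x :: "nat \<Rightarrow> real"
  assumes c_pos: "c > 0"
    and nu: "prob_on_Rplus \<nu>" and nu_not_dirac: "\<nu> \<noteq> return borel 0"
    and nut: "prob_on_Rplus \<nu>t" and nut_not_dirac: "\<nu>t \<noteq> return borel 0"
    and sol: "\<And>i. i \<in> {1, 2} \<Longrightarrow>
         dt i \<in> domD \<nu> \<and> x i \<noteq> 0
       \<and> d i = c * (LINT t|\<nu>. t / (- x i * (1 + dt i * t)))
       \<and> d i \<in> domD \<nu>t
       \<and> dt i = (LINT t|\<nu>t. t / (- x i * (1 + d i * t)))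
       \<and> 1 - (x i)\<^sup>2 * (c * (LINT t|\<nu>. t\<^sup>2 / ((x i)\<^sup>2 * (1 + dt i * t)\<^sup>2)))
                     * (LINT t|\<nu>t. t\<^sup>2 / ((x i)\<^sup>2 * (1 + d i * t)\<^sup>2)) > 0"
    and dt_less: "dt 1 < dt 2"
    and x_same_sign: "x 1 * x 2 > 0"
    and interval: "{min (d 1) (d 2) .. max (d 1) (d 2)} \<subseteq> domD \<nu>t"
  shows "x 1 < x 2"
proof -
  have S1: "dt 1 \<in> domD \<nu> \<and> x 1 \<noteq> 0
       \<and> d 1 = c * (LINT t|\<nu>. t / (- x 1 * (1 + dt 1 * t)))
       \<and> d 1 \<in> domD \<nu>t
       \<and> dt 1 = (LINT t|\<nu>t. t / (- x 1 * (1 + d 1 * t)))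
       \<and> 1 - (x 1)\<^sup>2 * (c * (LINT t|\<nu>. t\<^sup>2 / ((x 1)\<^sup>2 * (1 + dt 1 * t)\<^sup>2)))
                     * (LINT t|\<nu>t. t\<^sup>2 / ((x 1)\<^sup>2 * (1 + d 1 * t)\<^sup>2)) > 0"
    by (rule sol) simp
  have S2: "dt 2 \<in> domD \<nu> \<and> x 2 \<noteq> 0
       \<and> d 2 = c * (LINT t|\<nu>. t / (- x 2 * (1 + dt 2 * t)))
       \<and> d 2 \<in> domD \<nu>t
       \<and> dt 2 = (LINT t|\<nu>t. t / (- x 2 * (1 + d 2 * t)))
       \<and> 1 - (x 2)\<^sup>2 * (c * (LINT t|\<nu>. t\<^sup>2 / ((x 2)\<^sup>2 * (1 + dt 2 * t)\<^sup>2)))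
                     * (LINT t|\<nu>t. t\<^sup>2 / ((x 2)\<^sup>2 * (1 + d 2 * t)\<^sup>2)) > 0"
    by (rule sol) simp
  define x1 where "x1 = x 1"
  define x2 where "x2 = x 2"
  define a1 where "a1 = dt 1"
  define a2 where "a2 = dt 2"
  define b1 where "b1 = d 1"
  define b2 where "b2 = d 2"
  define G1 where "G1 = (LINT t|\<nu>. t/(1+a1*t))"
  define G2 where "G2 = (LINT t|\<nu>. t/(1+a2*t))"
  define H1 where "H1 = (LINT t|\<nu>t. t/(1+b1*t))"
  define H2 where "H2 = (LINT t|\<nu>t. t/(1+b2*t))"
  define At where "At = (LINT t|\<nu>. (t/(1+a1*t))*(t/(1+a2*t)))"
  define Bt where "Bt = (LINT t|\<nu>t. (t/(1+b1*t))*(t/(1+b2*t)))"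
  define A1 where "A1 = (LINT t|\<nu>. (t/(1+a1*t))^2)"
  define A2 where "A2 = (LINT t|\<nu>. (t/(1+a2*t))^2)"
  define B1 where "B1 = (LINT t|\<nu>t. (t/(1+b1*t))^2)"
  define B2 where "B2 = (LINT t|\<nu>t. (t/(1+b2*t))^2)"
  have x1n: "x1 \<noteq> 0" unfolding x1_def using S1 by blast
  have x2n: "x2 \<noteq> 0" unfolding x2_def using S2 by blast
  have a1D: "a1 \<in> domD \<nu>" unfolding a1_def using S1 by blast
  have a2D: "a2 \<in> domD \<nu>" unfolding a2_def using S2 by blast
  have b1D: "b1 \<in> domD \<nu>t" unfolding b1_def using S1 by blast
  have b2D: "b2 \<in> domD \<nu>t" unfolding b2_def using S2 by blast
  have I: "{min b1 b2 .. max b1 b2} \<subseteq> domD \<nu>t" using interval by (simp add: b1_def b2_def)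
  note SA = side[OF nu a1D a2D] and SB = side[OF nut b1D b2D]
  have Gd: "G1 - G2 = (a2 - a1) * At" using SA(3) by (simp add: G1_def G2_def At_def)
  have Hd: "H1 - H2 = (b2 - b1) * Bt" using SB(3) by (simp add: H1_def H2_def Bt_def)
  have CSA: "At^2 \<le> A1 * A2" using SA(4) by (simp add: A1_def A2_def At_def)
  have CSB: "Bt^2 \<le> B1 * B2" using SB(4) by (simp add: B1_def B2_def Bt_def)
  have K: "H1 - b2 * Bt > 0" using side2[OF nut b1D b2D I nut_not_dirac] by (simp add: H1_def Bt_def)
  have A1p: "A1 \<ge> 0" "A2 \<ge> 0" "B1 \<ge> 0" "B2 \<ge> 0" by (simp_all add: A1_def A2_def B1_def B2_def)
  have x1n': "x 1 \<noteq> 0" using x1n by (simp add: x1_def)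
  have x2n': "x 2 \<noteq> 0" using x2n by (simp add: x2_def)
  have s1a: "d 1 = c * (LINT t|\<nu>. t / (- x 1 * (1 + dt 1 * t)))" using S1 by blast
  have s2a: "d 2 = c * (LINT t|\<nu>. t / (- x 2 * (1 + dt 2 * t)))" using S2 by blast
  have s1b: "dt 1 = (LINT t|\<nu>t. t / (- x 1 * (1 + d 1 * t)))" using S1 by blast
  have s2b: "dt 2 = (LINT t|\<nu>t. t / (- x 2 * (1 + d 2 * t)))" using S2 by blast
  have s1c: "1 - (x 1)\<^sup>2 * (c * (LINT t|\<nu>. t\<^sup>2 / ((x 1)\<^sup>2 * (1 + dt 1 * t)\<^sup>2)))
                     * (LINT t|\<nu>t. t\<^sup>2 / ((x 1)\<^sup>2 * (1 + d 1 * t)\<^sup>2)) > 0" using S1 by blast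
  have s2c: "1 - (x 2)\<^sup>2 * (c * (LINT t|\<nu>. t\<^sup>2 / ((x 2)\<^sup>2 * (1 + dt 2 * t)\<^sup>2)))
                     * (LINT t|\<nu>t. t\<^sup>2 / ((x 2)\<^sup>2 * (1 + d 2 * t)\<^sup>2)) > 0" using S2 by blast
  have e1: "x1 * b1 = - c * G1"
  proof -
    have "b1 = c * (- G1 / x1)" unfolding b1_def G1_def x1_def a1_def
      using s1a int_scale[OF x1n', of \<nu> "dt 1"] by simp
    then show ?thesis using x1n by (simp add: field_simps)
  qed
  have e2: "x2 * b2 = - c * G2"
  proof -
    have "b2 = c * (- G2 / x2)" unfolding b2_def G2_def x2_def a2_def
      using s2a int_scale[OF x2n', of \<nu> "dt 2"] by simp
    then show ?thesis using x2n by (simp add: field_simps)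
  qed
  have e3: "x1 * a1 = - H1"
  proof -
    have "a1 = - H1 / x1" unfolding b1_def H1_def x1_def a1_def
      using s1b int_scale[OF x1n', of \<nu>t "d 1"] by simp
    then show ?thesis using x1n by (simp add: field_simps)
  qed
  have e4: "x2 * a2 = - H2"
  proof -
    have "a2 = - H2 / x2" unfolding b2_def H2_def x2_def a2_def
      using s2b int_scale[OF x2n', of \<nu>t "d 2"] by simp
    then show ?thesis using x2n by (simp add: field_simps)
  qed
  have st1: "c * A1 * B1 < x1^2"
  proof -
    have "1 - x1^2 * (c * (A1 / x1^2)) * (B1 / x1^2) > 0"
      unfolding A1_def B1_def x1_def a1_def b1_def
      using s1c int_scale2[of \<nu> "x 1" "dt 1"] int_scale2[of \<nu>t "x 1" "d 1"] by simp
    moreover have "1 - x1^2 * (c * (A1 / x1^2)) * (B1 / x1^2) = (x1^2 - c * A1 * B1) / x1^2"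
      using x1n by (simp add: field_simps power2_eq_square)
    ultimately have "0 < (x1^2 - c * A1 * B1) / x1^2" by simp
    moreover have "x1^2 > 0" using x1n by simp
    ultimately show ?thesis by (simp add: zero_less_divide_iff)
  qed
  have st2: "c * A2 * B2 < x2^2"
  proof -
    have "1 - x2^2 * (c * (A2 / x2^2)) * (B2 / x2^2) > 0"
      unfolding A2_def B2_def x2_def a2_def b2_def
      using s2c int_scale2[of \<nu> "x 2" "dt 2"] int_scale2[of \<nu>t "x 2" "d 2"] by simp
    moreover have "1 - x2^2 * (c * (A2 / x2^2)) * (B2 / x2^2) = (x2^2 - c * A2 * B2) / x2^2"
      using x2n by (simp add: field_simps power2_eq_square)
    ultimately have "0 < (x2^2 - c * A2 * B2) / x2^2" by simp
    moreover have "x2^2 > 0" using x2n by simp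
    ultimately show ?thesis by (simp add: zero_less_divide_iff)
  qed
  have xx: "x1 * x2 > 0" using x_same_sign by (simp add: x1_def x2_def)
  have u: "a2 - a1 > 0" using dt_less by (simp add: a1_def a2_def)
  have P1: "(c*At*Bt)^2 \<le> (c*A1*B1) * (c*A2*B2)"
  proof -
    have "At^2 * Bt^2 \<le> (A1*A2) * (B1*B2)"
      by (rule mult_mono[OF CSA CSB]) (use A1p in auto)
    then have "c^2 * (At^2 * Bt^2) \<le> c^2 * ((A1*A2) * (B1*B2))"
      by (rule mult_left_mono) simp
    then show ?thesis by (simp add: power_mult_distrib algebra_simps power2_eq_square)
  qed
  have P2: "(c*A1*B1) * (c*A2*B2) < x1^2 * x2^2"
    by (rule mult_strict_mono[OF st1 st2]) (use x1n x2n A1p c_pos in auto)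
  have "(c*At*Bt)^2 < (x1*x2)^2" using P1 P2 by (simp add: power_mult_distrib)
  then have "c*At*Bt < x1*x2" by (rule power2_less_imp_less) (use xx in simp)
  then have det: "x1*x2 - c*At*Bt > 0" by simp
  have hG: "c*At*(a2 - a1) = c*(G1 - G2)" using Gd by simp
  have E1: "c*At*(a2 - a1) - (x2*b2 - x1*b1) = 0" using hG e1 e2 by (simp add: algebra_simps)
  have E2: "x2*a2 - x1*a1 - Bt*(b2 - b1) = 0" using e3 e4 Hd by (simp add: algebra_simps)
  have idn: "(x1*x2 - c*At*Bt)*(a2 - a1) - (x1 - x2)*(x1*a1 + Bt*b2)
      = - Bt * (c*At*(a2 - a1) - (x2*b2 - x1*b1)) + x1 * (x2*a2 - x1*a1 - Bt*(b2 - b1))"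
    by (simp add: algebra_simps)
  have key: "(x1*x2 - c*At*Bt)*(a2 - a1) = - (x1 - x2) * (H1 - b2*Bt)"
  proof -
    have k1: "(x1*x2 - c*At*Bt)*(a2 - a1) = (x1 - x2)*(x1*a1 + Bt*b2)" using idn E1 E2 by simp
    have k2: "x1*a1 + Bt*b2 = -(H1 - b2*Bt)" using e3 by simp
    have k3: "(x1 - x2)*(x1*a1 + Bt*b2) = - (x1 - x2) * (H1 - b2*Bt)"
      unfolding k2 by (simp only: mult_minus_right mult_minus_left)
    show ?thesis using k1 k3 by (rule trans)
  qed
  have "x1 < x2"
  proof (rule ccontr)
    assume "\<not> x1 < x2"
    then have "(x1 - x2) * (H1 - b2*Bt) \<ge> 0" using K by simp
    moreover have "(x1*x2 - c*At*Bt)*(a2 - a1) > 0" using det u by simp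
    ultimately show False using key by linarith
  qed
  then show ?thesis by (simp add: x1_def x2_def)
qed

end
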